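(* Consider any divide-and-conquer algorithm for computing $\mu(\cdot)$ on $n$-column matrices of $O(k)$-bit integers, i.e. an assignment of an output (bit string) $s(A)$ to each such matrix $A$ (a sub-problem) together with a join such that for any two such matrices $A_0,A_1$, the output for their vertical concatenation $A_{01}$ ($A_0$'s rows followed by $A_1$'s rows) is computed by the join from $s(A_0)$ and $s(A_1)$ alone, and $\mu(A)$ is determined by $s(A)$. Then for every $r\le n(n+1)/2$, the output of a sub-problem of $r$ rows has size $\Omega(kr)$ bits (in the worst case over $r$-row matrices). In particular, solutions to sub-problems of size $O(n^2)$ require $\Omega(kn^2)$ bits.
   Context: For integers $i\le j$, $[i:j]=\{i,\dots,j\}$; $\mathbb{I}_n=\{[i:j]:1\le i\le j\le n\}$. For a matrix $A=[a_{ij}]$ with $n$ columns, $\mu_A(J)=\max_{k'\ge1}\sum_{i=1}^{k'}\sum_{j\in J}a_{ij}$ (maximum over row indices $k'$) for $J\in\mathbb{I}_n$, and the maximum top subarray sum of $A$ is $\mu(A)=\max_{J\in\mathbb{I}_n}\mu_A(J)$. *)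

theory Defs
  imports Complex_Main
begin

text \<open>A matrix with n columns is a non-empty list of rows (row 1 first), each row an
  int list of length n. Columns are indexed 1..n, so entry a_{ij} is (A!(i-1))!(j-1).\<close>

definition valid_matrix :: "nat \<Rightarrow> nat \<Rightarrow> int list list \<Rightarrow> bool" where
  "valid_matrix n b A \<longleftrightarrow> A \<noteq> [] \<and>
     (\<forall>row\<in>set A. length row = n \<and> (\<forall>x\<in>set row. \<bar>x\<bar> < 2 ^ b))"

definition row_int_sum :: "int list \<Rightarrow> nat \<Rightarrow> nat \<Rightarrow> int" where
  "row_int_sum row i j = (\<Sum>j'\<in>{i..j}. row ! (j' - 1))"

definition mu_J :: "int list list \<Rightarrow> nat \<Rightarrow> nat \<Rightarrow> int" where
  "mu_J A i j = Max {(\<Sum>t<k'. row_int_sum (A ! t) i j) | k'. 1 \<le> k' \<and> k' \<le> length A}"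

definition mu :: "nat \<Rightarrow> int list list \<Rightarrow> int" where
  "mu n A = Max {mu_J A i j | i j. 1 \<le> i \<and> i \<le> j \<and> j \<le> n}"

definition divide_conquer ::
  "nat \<Rightarrow> nat \<Rightarrow> (int list list \<Rightarrow> bool list) \<Rightarrow> (bool list \<Rightarrow> bool list \<Rightarrow> bool list) \<Rightarrow> bool" where
  "divide_conquer n b s join \<longleftrightarrow>
     (\<forall>A0 A1. valid_matrix n b A0 \<longrightarrow> valid_matrix n b A1 \<longrightarrow>
        s (A0 @ A1) = join (s A0) (s A1)) \<and>
     (\<forall>A A'. valid_matrix n b A \<longrightarrow> valid_matrix n b A' \<longrightarrow> s A = s A' \<longrightarrow> mu n A = mu n A')"

end

theory Submission
  imports Defs "HOL-Library.FuncSet"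
begin


definition peak :: "nat \<Rightarrow> nat \<Rightarrow> int \<Rightarrow> int \<Rightarrow> nat \<Rightarrow> int" where
  "peak a b u v m = (if m = 0 then 0 else (if a = 0 then v else 0) + (if m = b then u else 0) - (if m = a then v else 0))"

definition rowOf :: "nat \<Rightarrow> (nat \<Rightarrow> int) \<Rightarrow> int list" where
  "rowOf n g = map (\<lambda>j. g j - g (j - 1)) [1..<Suc n]"

definition matQ :: "nat \<Rightarrow> nat \<Rightarrow> (nat \<Rightarrow> nat \<Rightarrow> int) \<Rightarrow> int list list" where
  "matQ n len Q = map (\<lambda>t. rowOf n (\<lambda>m. Q (Suc t) m - Q t m)) [0..<len]"

lemma peak_own: "a < b \<Longrightarrow> peak a b u v b - peak a b u v a = u + v"
  by (auto simp: peak_def)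

lemma peak_other: "a < b \<Longrightarrow> a' < b' \<Longrightarrow> (a', b') \<noteq> (a, b) \<Longrightarrow> 0 \<le> v \<Longrightarrow> v \<le> u \<Longrightarrow>
   peak a b u v b' - peak a b u v a' \<le> u"
  by (auto simp: peak_def)

lemma peak_bound: "0 \<le> v \<Longrightarrow> 0 \<le> u \<Longrightarrow> \<bar>peak a b u v m\<bar> \<le> u + v"
  by (auto simp: peak_def)

lemma tele: "iz \<le> j \<Longrightarrow> (\<Sum>j'\<in>{Suc iz..j}. g j' - g (j' - 1)) = (g j - g iz :: int)"
proof (induction j)
  case 0 then show ?case by simp
next
  case (Suc j)
  show ?case
  proof (cases "iz = Suc j")
    case True then show ?thesis by simp
  next
    case False
    then have "iz \<le> j" using Suc.prems by simp
    then show ?thesis using Suc.IH by (simp add: sum.cl_ivl_Suc)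
  qed
qed

lemma row_int_sum_rowOf:
  assumes "1 \<le> i" "i \<le> j" "j \<le> n"
  shows "row_int_sum (rowOf n g) i j = g j - g (i - 1)"
proof -
  have "row_int_sum (rowOf n g) i j = (\<Sum>j'\<in>{i..j}. g j' - g (j' - 1))"
    unfolding row_int_sum_def
  proof (rule sum.cong)
    fix x assume "x \<in> {i..j}"
    then have "x - 1 < n" "1 \<le> x" using assms by auto
    then show "rowOf n g ! (x - 1) = g x - g (x - 1)"
      by (simp add: rowOf_def nth_map del: upt_Suc)
  qed simp
  also have "\<dots> = g j - g (i - 1)"
    using tele[of "i - 1" j g] assms by simp
  finally show ?thesis .
qed

lemma length_rowOf[simp]: "length (rowOf n g) = n" by (simp add: rowOf_def)

lemma rowOf_bound:
  assumes "\<And>m. \<bar>g m\<bar> \<le> K" "y \<in> set (rowOf n g)"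
  shows "\<bar>y\<bar> \<le> 2 * K"
proof -
  from assms(2) obtain j where "y = g j - g (j - 1)" by (auto simp: rowOf_def)
  then show ?thesis using assms(1)[of j] assms(1)[of "j - 1"] by linarith
qed

lemma matQ_prefix:
  assumes "Q 0 = (\<lambda>_. 0)" "k' \<le> len" "1 \<le> i" "i \<le> j" "j \<le> n"
  shows "(\<Sum>t<k'. row_int_sum (matQ n len Q ! t) i j) = Q k' j - Q k' (i - 1)"
  using assms(2)
proof (induction k')
  case 0 then show ?case using assms(1) by simp
next
  case (Suc k')
  have "matQ n len Q ! k' = rowOf n (\<lambda>m. Q (Suc k') m - Q k' m)"
    using Suc.prems by (simp add: matQ_def)
  then show ?case using Suc row_int_sum_rowOf[OF assms(3-5)] by simp
qed

lemma length_matQ[simp]: "length (matQ n len Q) = len" by (simp add: matQ_def)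

lemma matQ_bound:
  assumes "\<And>k m. k \<le> len \<Longrightarrow> \<bar>Q k m\<bar> \<le> K" "row \<in> set (matQ n len Q)" "y \<in> set row"
  shows "\<bar>y\<bar> \<le> 4 * K"
proof -
  from assms(2) obtain t where "row = rowOf n (\<lambda>m. Q (Suc t) m - Q t m)" "t < len" by (auto simp: matQ_def)
  moreover have "\<bar>Q (Suc t) m - Q t m\<bar> \<le> 2 * K" for m
    using assms(1)[of "Suc t" m] assms(1)[of t m] \<open>t < len\<close> by linarith
  ultimately show ?thesis using rowOf_bound[of _ "2 * K"] assms(3) by fastforce
qed

lemma mu_eqI:
  assumes "A \<noteq> []"
    and le: "\<And>k' i j. 1 \<le> k' \<Longrightarrow> k' \<le> length A \<Longrightarrow> 1 \<le> i \<Longrightarrow> i \<le> j \<Longrightarrow> j \<le> n \<Longrightarrow>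
          (\<Sum>t<k'. row_int_sum (A ! t) i j) \<le> V"
    and w: "1 \<le> kz" "kz \<le> length A" "1 \<le> iz" "iz \<le> jz" "jz \<le> n"
          "(\<Sum>t<kz. row_int_sum (A ! t) iz jz) = V"
  shows "mu n A = V"
proof -
  have fin: "finite {(\<Sum>t<k'. row_int_sum (A ! t) i j) | k'. 1 \<le> k' \<and> k' \<le> length A}" for i j
    by simp
  have ne: "{(\<Sum>t<k'. row_int_sum (A ! t) i j) | k'. 1 \<le> k' \<and> k' \<le> length A} \<noteq> {}" for i j
  proof -
    have "1 \<le> length A" using assms(1) by (cases A) auto
    then show ?thesis by blast
  qed
  have muJ_le: "mu_J A i j \<le> V" if "1 \<le> i" "i \<le> j" "j \<le> n" for i j
    unfolding mu_J_def using fin ne le that by (auto simp: Max_le_iff)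
  have muJ0: "mu_J A iz jz = V"
  proof -
    have "V \<le> mu_J A iz jz" unfolding mu_J_def
      by (rule Max_ge[OF fin]) (use w in auto)
    then show ?thesis using muJ_le w by force
  qed
  have fin2: "finite {mu_J A i j | i j. 1 \<le> i \<and> i \<le> j \<and> j \<le> n}"
    by (rule finite_subset[of _ "{mu_J A i j | i j. i \<in> {1..n} \<and> j \<in> {1..n}}"])
       (force, rule finite_image_set2, auto)
  show ?thesis unfolding mu_def
    by (rule Max_eqI[OF fin2]) (use muJ_le muJ0 w in auto)
qed



definition MM :: "nat \<Rightarrow> int" where "MM k = 2 ^ (k + 1)"

definition QA :: "nat \<Rightarrow> (nat \<Rightarrow> nat \<times> nat) \<Rightarrow> (nat \<Rightarrow> nat) \<Rightarrow> nat \<Rightarrow> nat \<Rightarrow> int" where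
  "QA k p x k' m = (if k' = 0 then 0 else
     peak (fst (p (k' - 1))) (snd (p (k' - 1))) (MM k + int (x (k' - 1))) (MM k) m)"

definition HB :: "nat \<Rightarrow> (nat \<Rightarrow> nat \<times> nat) \<Rightarrow> nat \<Rightarrow> nat \<Rightarrow> int" where
  "HB k p t m = peak (fst (p t)) (snd (p t)) (2 * MM k) (2 * MM k) m"

definition QB :: "nat \<Rightarrow> (nat \<Rightarrow> nat \<times> nat) \<Rightarrow> (nat \<Rightarrow> nat) \<Rightarrow> nat \<Rightarrow> nat \<Rightarrow> nat \<Rightarrow> int" where
  "QB k p x t k' m = (if k' = 0 then 0 else HB k p t m + QA k p x (k' - 1) m)"

lemma MM_pos: "MM k = 2 * 2 ^ k" by (simp add: MM_def)

lemma QA_diff: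
  assumes P: "\<forall>t<r. fst (p t) < snd (p t)" and X: "\<forall>t<r. x t < 2 ^ k"
    and "s \<le> r" "a < b"
  shows "QA k p x s b - QA k p x s a \<le> 2 * MM k + 2 ^ k"
proof (cases s)
  case 0 then show ?thesis by (simp add: QA_def MM_def)
next
  case (Suc s')
  then have s': "s' < r" using assms by simp
  have xs: "int (x s') < 2 ^ k"
  proof -
    have "int (x s') < int (2 ^ k)" using X s' by simp
    then show ?thesis by simp
  qed
  have h: "fst (p s') < snd (p s')" using P s' by blast
  show ?thesis
  proof (cases "(a, b) = p s'")
    case True
    then have "a = fst (p s')" "b = snd (p s')" by (metis fst_conv, metis snd_conv)
    then show ?thesis using peak_own[OF h, of "MM k + int (x s')" "MM k"] Suc xs
      by (simp add: QA_def)
  next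
    case False
    then have "(a, b) \<noteq> (fst (p s'), snd (p s'))" by simp
    from peak_other[OF h assms(4) this, of "MM k" "MM k + int (x s')"]
    have pk: "peak (fst (p s')) (snd (p s')) (MM k + int (x s')) (MM k) b -
        peak (fst (p s')) (snd (p s')) (MM k + int (x s')) (MM k) a \<le> MM k + int (x s')"
      by (simp add: MM_def)
    moreover have "QA k p x s b - QA k p x s a = peak (fst (p s')) (snd (p s')) (MM k + int (x s')) (MM k) b -
        peak (fst (p s')) (snd (p s')) (MM k + int (x s')) (MM k) a" using Suc by (simp add: QA_def)
    ultimately show ?thesis using xs MM_pos[of k] by linarith
  qed
qed

lemma QA_diff_own:
  assumes P: "\<forall>t<r. fst (p t) < snd (p t)" and inj: "inj_on p {..<r}" and X: "\<forall>t<r. x t < 2 ^ k"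
    and "s \<le> r" "t < r" "p t = (a, b)"
  shows "QA k p x s b - QA k p x s a \<le> 2 * MM k + int (x t)"
    and "QA k p x (Suc t) b - QA k p x (Suc t) a = 2 * MM k + int (x t)"
proof -
  have ab: "a < b" using P assms(5,6) by (metis fst_conv snd_conv)
  show "QA k p x (Suc t) b - QA k p x (Suc t) a = 2 * MM k + int (x t)"
    using peak_own[OF ab, of "MM k + int (x t)" "MM k"] assms(6) by (simp add: QA_def)
  show "QA k p x s b - QA k p x s a \<le> 2 * MM k + int (x t)"
  proof (cases s)
    case 0 then show ?thesis by (simp add: QA_def MM_def)
  next
    case (Suc s')
    then have s': "s' < r" using assms by simp
    show ?thesis
    proof (cases "s' = t")
      case True
      then show ?thesis using peak_own[OF ab, of "MM k + int (x t)" "MM k"] assms(6) Suc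
        by (simp add: QA_def)
    next
      case False
      then have "p s' \<noteq> p t" using inj s' assms(5) by (meson inj_onD lessThan_iff)
      then have ne: "(a, b) \<noteq> (fst (p s'), snd (p s'))" using assms(6) by auto
      have h: "fst (p s') < snd (p s')" using P s' by blast
      have xs: "int (x s') < 2 ^ k"
  proof -
    have "int (x s') < int (2 ^ k)" using X s' by simp
    then show ?thesis by simp
  qed
      from peak_other[OF h ab ne, of "MM k" "MM k + int (x s')"]
      have pk: "peak (fst (p s')) (snd (p s')) (MM k + int (x s')) (MM k) b -
          peak (fst (p s')) (snd (p s')) (MM k + int (x s')) (MM k) a \<le> MM k + int (x s')"
        by (simp add: MM_def)
      moreover have "QA k p x s b - QA k p x s a = peak (fst (p s')) (snd (p s')) (MM k + int (x s')) (MM k) b -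
          peak (fst (p s')) (snd (p s')) (MM k + int (x s')) (MM k) a" using Suc by (simp add: QA_def)
      ultimately show ?thesis using xs MM_pos[of k] by linarith
    qed
  qed
qed

lemma mu_BA:
  assumes P: "\<forall>t<r. fst (p t) < snd (p t) \<and> snd (p t) \<le> n" and inj: "inj_on p {..<r}"
    and X: "\<forall>t<r. x t < 2 ^ k" and t: "t < r"
  shows "mu n (matQ n (Suc r) (QB k p x t)) = 6 * MM k + int (x t)"
proof -
  obtain a b where pt: "p t = (a, b)" by fastforce
  have ab: "a < b" "b \<le> n" using P t pt by (metis fst_conv snd_conv, metis snd_conv)
  have P': "\<forall>t<r. fst (p t) < snd (p t)" using P by blast
  have Q0: "QB k p x t 0 = (\<lambda>_. 0)" by (simp add: QB_def fun_eq_iff)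
  have pre: "(\<Sum>ta<k'. row_int_sum (matQ n (Suc r) (QB k p x t) ! ta) i j) =
      (HB k p t j - HB k p t (i - 1)) + (QA k p x (k' - 1) j - QA k p x (k' - 1) (i - 1))"
    if "1 \<le> k'" "k' \<le> Suc r" "1 \<le> i" "i \<le> j" "j \<le> n" for k' i j
    using matQ_prefix[where Q="QB k p x t" and k'=k' and len="Suc r" and i=i and j=j and n=n, OF Q0 that(2-5)] that(1) by (simp add: QB_def)
  have hown: "HB k p t b - HB k p t a = 4 * MM k"
    using peak_own[OF ab(1), of "2 * MM k" "2 * MM k"] pt by (simp add: HB_def)
  have xt: "int (x t) < 2 ^ k"
  proof -
    have "int (x t) < int (2 ^ k)" using X t by simp
    then show ?thesis by simp
  qed
  show ?thesis
  proof (rule mu_eqI[where kz = "Suc (Suc t)" and iz = "Suc a" and jz = b])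
    show "matQ n (Suc r) (QB k p x t) \<noteq> []" by (simp add: matQ_def)
    show "(\<Sum>ta<Suc (Suc t). row_int_sum (matQ n (Suc r) (QB k p x t) ! ta) (Suc a) b) =
        6 * MM k + int (x t)"
      using pre[of "Suc (Suc t)" "Suc a" b] t ab hown QA_diff_own(2)[OF P' inj X _ t pt, of r]
      by simp
  next
    fix k' i j
    assume h: "1 \<le> k'" "k' \<le> length (matQ n (Suc r) (QB k p x t))" "1 \<le> i" "i \<le> j" "j \<le> n"
    then have hk: "k' - 1 \<le> r" by simp
    have ij: "i - 1 < j" using h by simp
    show "(\<Sum>ta<k'. row_int_sum (matQ n (Suc r) (QB k p x t) ! ta) i j) \<le> 6 * MM k + int (x t)"
    proof (cases "(i - 1, j) = (a, b)")
      case True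
      then show ?thesis using pre[of k' i j] h hown QA_diff_own(1)[OF P' inj X hk t pt] by simp
    next
      case False
      have hb: "HB k p t j - HB k p t (i - 1) \<le> 2 * MM k"
        using peak_other[OF ab(1) ij, of "2 * MM k" "2 * MM k"] False pt
        by (simp add: HB_def MM_def)
      have "QA k p x (k' - 1) j - QA k p x (k' - 1) (i - 1) \<le> 2 * MM k + 2 ^ k"
        using QA_diff[OF P' X hk ij] .
      moreover have kr: "k' \<le> Suc r" using h by simp
      moreover have "0 \<le> int (x t)" "(0::int) \<le> 2 ^ k" by simp_all
      ultimately show ?thesis using pre[OF h(1) kr h(3-5)] hb MM_pos[of k] by linarith
    qed
  qed (use t ab in auto)
qed



definition Pairs :: "nat \<Rightarrow> (nat \<times> nat) set" where
  "Pairs n = {(a, b). a < b \<and> b \<le> n}"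

lemma Pairs_finite: "finite (Pairs n)"
  by (rule finite_subset[of _ "{0..n} \<times> {0..n}"]) (auto simp: Pairs_def)

lemma Pairs_card: "2 * card (Pairs n) = n * (n + 1)"
proof (induction n)
  case 0
  have "Pairs 0 = {}" by (auto simp: Pairs_def)
  then show ?case by simp
next
  case (Suc n)
  have eq: "Pairs (Suc n) = Pairs n \<union> (\<lambda>a. (a, Suc n)) ` {..n}"
    by (auto simp: Pairs_def)
  have disj: "Pairs n \<inter> (\<lambda>a. (a, Suc n)) ` {..n} = {}" by (auto simp: Pairs_def)
  have "card (Pairs (Suc n)) = card (Pairs n) + card ((\<lambda>a. (a, Suc n)) ` {..n})"
    unfolding eq by (rule card_Un_disjoint[OF Pairs_finite _ disj]) simp
  also have "card ((\<lambda>a. (a, Suc n)) ` {..n}) = Suc n"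
    by (subst card_image) (auto simp: inj_on_def)
  finally show ?case using Suc.IH by simp
qed

lemma valid_append: "valid_matrix n b A \<Longrightarrow> valid_matrix n b B \<Longrightarrow> valid_matrix n b (A @ B)"
  by (auto simp: valid_matrix_def)

lemma pow_bound: "1 \<le> k \<Longrightarrow> 64 * (2::int) ^ k \<le> 2 ^ (7 * k)"
proof -
  assume k: "1 \<le> k"
  have "(2::int) ^ 6 \<le> 2 ^ (6 * k)" using k by (intro power_increasing) auto
  then have "64 * (2::int) ^ k \<le> 2 ^ (6 * k) * 2 ^ k" by simp
  also have "\<dots> = 2 ^ (7 * k)" by (simp add: power_add[symmetric])
  finally show ?thesis .
qed

lemma QA_abs:
  assumes X: "\<forall>t<r. x t < 2 ^ k" and "k' \<le> r"
  shows "\<bar>QA k p x k' m\<bar> \<le> 3 * MM k"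
proof (cases k')
  case 0 then show ?thesis by (simp add: QA_def MM_def)
next
  case (Suc s)
  have xs: "int (x s) < 2 ^ k"
  proof -
    have "int (x s) < int (2 ^ k)" using X Suc assms(2) by simp
    then show ?thesis by simp
  qed
  have "\<bar>peak (fst (p s)) (snd (p s)) (MM k + int (x s)) (MM k) m\<bar> \<le> (MM k + int (x s)) + MM k"
    by (rule peak_bound) (auto simp: MM_def)
  moreover have "QA k p x k' m = peak (fst (p s)) (snd (p s)) (MM k + int (x s)) (MM k) m"
    using Suc by (simp add: QA_def)
  ultimately show ?thesis using xs MM_pos[of k] by linarith
qed

lemma HB_abs: "\<bar>HB k p t m\<bar> \<le> 4 * MM k"
  using peak_bound[of "2 * MM k" "2 * MM k" "fst (p t)" "snd (p t)" m]
  by (simp add: HB_def MM_def)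

lemma valid_A:
  assumes X: "\<forall>t<r. x t < 2 ^ k" and "1 \<le> k" "1 \<le> r"
  shows "valid_matrix n (7 * k) (matQ n r (QA k p x))"
  unfolding valid_matrix_def
proof (intro conjI ballI)
  show "matQ n r (QA k p x) \<noteq> []" using assms(3) by (simp add: matQ_def)
  fix row assume row: "row \<in> set (matQ n r (QA k p x))"
  then show "length row = n" by (auto simp: matQ_def)
  fix y assume "y \<in> set row"
  then have "\<bar>y\<bar> \<le> 4 * (3 * MM k)"
    using matQ_bound[OF _ row] QA_abs[OF X] by blast
  moreover have "(0::int) < 2 ^ k" by simp
  ultimately show "\<bar>y\<bar> < 2 ^ (7 * k)" using pow_bound[OF assms(2)] MM_pos[of k] by linarith
qed

lemma valid_B:
  assumes "1 \<le> k"
  shows "valid_matrix n (7 * k) [rowOf n (HB k p t)]"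
  unfolding valid_matrix_def
proof (intro conjI ballI)
  show "[rowOf n (HB k p t)] \<noteq> []" by simp
  fix row assume row: "row \<in> set [rowOf n (HB k p t)]"
  then show "length row = n" by simp
  fix y assume "y \<in> set row"
  then have "\<bar>y\<bar> \<le> 2 * (4 * MM k)"
    using rowOf_bound[OF HB_abs] row by auto
  moreover have "(0::int) < 2 ^ k" by simp
  ultimately show "\<bar>y\<bar> < 2 ^ (7 * k)" using pow_bound[OF assms] MM_pos[of k] by linarith
qed

lemma BA_eq: "[rowOf n (HB k p t)] @ matQ n r (QA k p x) = matQ n (Suc r) (QB k p x t)"
proof -
  have "matQ n (Suc r) (QB k p x t) =
     rowOf n (\<lambda>m. QB k p x t 1 m - QB k p x t 0 m) #
     map (\<lambda>t'. rowOf n (\<lambda>m. QB k p x t (Suc (Suc t')) m - QB k p x t (Suc t') m)) [0..<r]"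
    unfolding matQ_def by (simp add: upt_conv_Cons map_Suc_upt[symmetric] del: upt_Suc)
  also have "\<dots> = [rowOf n (HB k p t)] @ matQ n r (QA k p x)"
    by (simp add: matQ_def QB_def QA_def)
  finally show ?thesis by simp
qed



theorem theorem6p7:
  shows "\<exists>C::nat. C \<ge> 1 \<and> (\<exists>c::real. c > 0 \<and>
    (\<forall>n k r (s :: int list list \<Rightarrow> bool list) join.
       n \<ge> 1 \<longrightarrow> k \<ge> 1 \<longrightarrow> 1 \<le> r \<longrightarrow> r \<le> n * (n + 1) div 2 \<longrightarrow>
       divide_conquer n (C * k) s join \<longrightarrow>
       (\<exists>A. valid_matrix n (C * k) A \<and> length A = r \<and>
            real (length (s A)) \<ge> c * real k * real r)))"
proof (intro exI[of _ "7::nat"] conjI exI[of _ "1::real"] allI impI)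
  fix n k r :: nat and s :: "int list list \<Rightarrow> bool list" and join
  assume n: "n \<ge> 1" and k: "k \<ge> 1" and r: "1 \<le> r" and rn: "r \<le> n * (n + 1) div 2"
    and dc: "divide_conquer n (7 * k) s join"
  have "card {..<r} \<le> card (Pairs n)" using rn Pairs_card[of n] by simp
  then obtain p where p: "p ` {..<r} \<subseteq> Pairs n" "inj_on p {..<r}"
    using card_le_inj[OF _ Pairs_finite] by blast
  have P: "\<forall>t<r. fst (p t) < snd (p t) \<and> snd (p t) \<le> n"
    using p(1) by (force simp: Pairs_def)
  define X where "X = PiE {..<r} (\<lambda>_. {..<(2::nat) ^ k})"
  define AA where "AA x = matQ n r (QA k p x)" for x
  have Xb: "\<forall>t<r. x t < 2 ^ k" if "x \<in> X" for x using that by (auto simp: X_def)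
  have validA: "valid_matrix n (7 * k) (AA x)" if "x \<in> X" for x
    unfolding AA_def by (rule valid_A[OF Xb[OF that] k r])
  have inj: "inj_on (\<lambda>x. s (AA x)) X"
  proof (rule inj_onI)
    fix x y assume x: "x \<in> X" and y: "y \<in> X" and eq: "s (AA x) = s (AA y)"
    show "x = y"
    proof (rule PiE_ext[OF x[unfolded X_def] y[unfolded X_def]])
      fix t assume "t \<in> {..<r}"
      then have t: "t < r" by simp
      define B where "B = [rowOf n (HB k p t)]"
      have vB: "valid_matrix n (7 * k) B" unfolding B_def by (rule valid_B[OF k])
      have J: "\<And>A0 A1. valid_matrix n (7 * k) A0 \<Longrightarrow> valid_matrix n (7 * k) A1 \<Longrightarrow>
          s (A0 @ A1) = join (s A0) (s A1)"
        and Mu: "\<And>A A'. valid_matrix n (7 * k) A \<Longrightarrow> valid_matrix n (7 * k) A' \<Longrightarrow>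
          s A = s A' \<Longrightarrow> mu n A = mu n A'"
        using dc unfolding divide_conquer_def by blast+
      have "s (B @ AA x) = join (s B) (s (AA x))" by (rule J[OF vB validA[OF x]])
      also have "\<dots> = s (B @ AA y)" using J[OF vB validA[OF y]] eq by simp
      finally have "mu n (B @ AA x) = mu n (B @ AA y)"
        by (rule Mu[OF valid_append[OF vB validA[OF x]] valid_append[OF vB validA[OF y]]])
      moreover have "mu n (B @ AA x) = 6 * MM k + int (x t)"
        unfolding B_def AA_def BA_eq by (rule mu_BA[OF P p(2) Xb[OF x] t])
      moreover have "mu n (B @ AA y) = 6 * MM k + int (y t)"
        unfolding B_def AA_def BA_eq by (rule mu_BA[OF P p(2) Xb[OF y] t])
      ultimately show "x t = y t" by simp
    qed
  qed
  have cardX: "card X = 2 ^ (k * r)"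
    unfolding X_def by (simp add: card_PiE power_mult)
  have "\<exists>x\<in>X. k * r \<le> length (s (AA x))"
  proof (rule ccontr)
    assume "\<not> ?thesis"
    have sub: "(\<lambda>x. s (AA x)) ` X \<subseteq> {xs. set xs \<subseteq> UNIV \<and> length xs \<le> k * r - 1}"
    proof
      fix z assume "z \<in> (\<lambda>x. s (AA x)) ` X"
      then obtain x where "x \<in> X" "z = s (AA x)" by blast
      then have "length z < k * r" using \<open>\<not> (\<exists>x\<in>X. k * r \<le> length (s (AA x)))\<close> by auto
      then show "z \<in> {xs. set xs \<subseteq> UNIV \<and> length xs \<le> k * r - 1}" by simp
    qed
    have "card ((\<lambda>x. s (AA x)) ` X) \<le> card {xs :: bool list. set xs \<subseteq> UNIV \<and> length xs \<le> k * r - 1}"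
      by (rule card_mono[OF _ sub], rule finite_lists_length_le, simp)
    also have "\<dots> = (\<Sum>i\<le>k * r - 1. 2 ^ i)"
      using card_lists_length_le[of "UNIV :: bool set" "k * r - 1"] by simp
    also have "\<dots> = (\<Sum>i=0..<k * r. (2::nat) ^ i)"
    proof -
      have pos: "0 < k * r" using k r by simp
      then have "Suc (k * r - 1) = k * r" by simp
      then have "{..k * r - 1} = {0..<k * r}" by (metis lessThan_Suc_atMost atLeast0LessThan)
      then show ?thesis by simp
    qed
    also have "\<dots> = 2 ^ (k * r) - 1" by (rule sum_power2)
    finally have "card ((\<lambda>x. s (AA x)) ` X) \<le> 2 ^ (k * r) - 1" .
    moreover have "card ((\<lambda>x. s (AA x)) ` X) = 2 ^ (k * r)"
      using card_image[OF inj] cardX by simp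
    moreover have "(0::nat) < 2 ^ (k * r)" by simp
    ultimately show False by linarith
  qed
  then obtain x where x: "x \<in> X" "k * r \<le> length (s (AA x))" by blast
  have "real (k * r) \<le> real (length (s (AA x)))" using x(2) by linarith
  then have "1 * real k * real r \<le> real (length (s (AA x)))" by simp
  then show "\<exists>A. valid_matrix n (7 * k) A \<and> length A = r \<and> 1 * real k * real r \<le> real (length (s A))"
    using validA[OF x(1)] by (intro exI[of _ "AA x"]) (simp add: AA_def)
qed simp_all

end
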